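(* Let \(\mathcal{F}\) be a set of increasing and amenable functions \(f\colon[0,\infty)\to[0,\infty)\). (a) If \(\mathcal{F}\) is \(2\)-separating, then for every metric space \((X,d)\) the following are equivalent: (i) \(f\circ d\) is a metric on \(X\) for every \(f\in\mathcal{F}\); (ii) \(d\) is an ultrametric on \(X\). (b) If \(\mathcal{F}\) is not \(2\)-separating, then there is a metric space \((X,d)\) such that \(f\circ d\) is a metric on \(X\) for every \(f\in\mathcal{F}\), but \(d\) is not an ultrametric on \(X\).
   Context: A function \(f\colon[0,\infty)\to[0,\infty)\) is amenable if \(f^{-1}(\{0\})=\{0\}\), and increasing if \(a\ge b\) implies \(f(a)\ge f(b)\). For \(k\in(1,\infty)\), a set \(\mathcal{F}\) of increasing amenable functions \([0,\infty)\to[0,\infty)\) is \(k\)-separating if for all \(t_1,t_2\in[0,\infty)\) with \(t_1<t_2\) there is \(f\in\mathcal{F}\) with \(k f(t_1)<f(t_2)\). A metric \(d\) is an ultrametric if \(d(x,y)\le\max\{d(x,z),d(z,y)\}\) for all \(x,y,z\). *)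

theory Defs
  imports "HOL-Analysis.Abstract_Metric_Spaces"
begin

text \<open>Functions [0,\<infinity>) \<rightarrow> [0,\<infinity>) are represented as real \<Rightarrow> real; only their
  values on [0,\<infinity>) matter, and we require that they map [0,\<infinity>) into [0,\<infinity>).\<close>

definition nonneg_fn :: "(real \<Rightarrow> real) \<Rightarrow> bool" where
  "nonneg_fn f \<longleftrightarrow> (\<forall>t\<ge>0. f t \<ge> 0)"

definition amenable :: "(real \<Rightarrow> real) \<Rightarrow> bool" where
  "amenable f \<longleftrightarrow> (\<forall>t\<ge>0. f t = 0 \<longleftrightarrow> t = 0)"

definition increasing_fn :: "(real \<Rightarrow> real) \<Rightarrow> bool" where
  "increasing_fn f \<longleftrightarrow> (\<forall>a b. 0 \<le> b \<and> b \<le> a \<longrightarrow> f b \<le> f a)"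

definition k_separating :: "real \<Rightarrow> (real \<Rightarrow> real) set \<Rightarrow> bool" where
  "k_separating k F \<longleftrightarrow>
     (\<forall>f\<in>F. nonneg_fn f \<and> increasing_fn f \<and> amenable f) \<and>
     (\<forall>t1 t2. 0 \<le> t1 \<and> t1 < t2 \<longrightarrow> (\<exists>f\<in>F. k * f t1 < f t2))"

definition ultrametric_on :: "'a set \<Rightarrow> ('a \<Rightarrow> 'a \<Rightarrow> real) \<Rightarrow> bool" where
  "ultrametric_on X d \<longleftrightarrow> Metric_space X d \<and>
     (\<forall>x\<in>X. \<forall>y\<in>X. \<forall>z\<in>X. d x y \<le> max (d x z) (d z y))"

end

theory Submission
  imports Defs
begin

lemma ultra_imp_metric:
  assumes "Metric_space X d" "\<forall>x\<in>X. \<forall>y\<in>X. \<forall>z\<in>X. d x y \<le> max (d x z) (d z y)"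
    "nonneg_fn f" "increasing_fn f" "amenable f"
  shows "Metric_space X (\<lambda>x y. f (d x y))"
proof
  interpret M: Metric_space X d by fact
  show "0 \<le> f (d x y)" for x y using assms(3) M.nonneg unfolding nonneg_fn_def by blast
  show "f (d x y) = f (d y x)" for x y using M.commute by simp
  show "(f (d x y) = 0) = (x = y)" if "x \<in> X" "y \<in> X" for x y
    using assms(5) M.nonneg[of x y] M.zero[OF that] unfolding amenable_def by blast
  show "f (d x z) \<le> f (d x y) + f (d y z)" if "x \<in> X" "y \<in> X" "z \<in> X" for x y z
  proof -
    have "d x z \<le> max (d x y) (d y z)" using assms(2) that by blast
    hence "f (d x z) \<le> f (max (d x y) (d y z))"
      using assms(4) M.nonneg[of x z] unfolding increasing_fn_def by blast
    moreover have "f (d x y) \<ge> 0" "f (d y z) \<ge> 0"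
      using assms(3) M.nonneg unfolding nonneg_fn_def by auto
    ultimately show ?thesis by (simp add: max_def split: if_splits)
  qed
qed

lemma metric_imp_ultra:
  assumes "Metric_space X d" "k_separating 2 F" "\<forall>f\<in>F. Metric_space X (\<lambda>x y. f (d x y))"
  shows "ultrametric_on X d"
  unfolding ultrametric_on_def
proof (intro conjI assms(1) ballI)
  interpret M: Metric_space X d by fact
  fix x y z assume xyz: "x \<in> X" "y \<in> X" "z \<in> X"
  show "d x y \<le> max (d x z) (d z y)"
  proof (rule ccontr)
    assume "\<not> ?thesis"
    hence lt: "max (d x z) (d z y) < d x y" by (simp only: not_le)
    have "0 \<le> max (d x z) (d z y)" by (simp add: le_max_iff_disj)
    then obtain f where f: "f \<in> F" "2 * f (max (d x z) (d z y)) < f (d x y)"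
      using assms(2) lt unfolding k_separating_def by blast
    have inc: "increasing_fn f" using assms(2) f(1) unfolding k_separating_def by blast
    have "f (d x z) \<le> f (max (d x z) (d z y))" "f (d z y) \<le> f (max (d x z) (d z y))"
      using inc M.nonneg unfolding increasing_fn_def by auto
    moreover interpret N: Metric_space X "\<lambda>x y. f (d x y)" using assms(3) f(1) by blast
    have "f (d x y) \<le> f (d x z) + f (d z y)" using N.triangle xyz by blast
    ultimately show False using f(2) by linarith
  qed
qed

definition tri :: "real \<Rightarrow> real \<Rightarrow> real \<Rightarrow> real \<Rightarrow> real" where
  "tri a b x y = (if x = y then 0 else if \<bar>x - y\<bar> = 2 then a else b)"

lemma tri_metric:
  assumes "0 < a" "0 < b" "a \<le> 2 * b"
  shows "Metric_space {0,1,2} (tri a b)"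
proof
  show "0 \<le> tri a b x y" for x y using assms by (simp add: tri_def)
  show "tri a b x y = tri a b y x" for x y by (simp add: tri_def abs_minus_commute)
  show "(tri a b x y = 0) = (x = y)" for x y using assms by (simp add: tri_def)
  show "tri a b x z \<le> tri a b x y + tri a b y z" if "x \<in> {0,1,2}" "y \<in> {0,1,2}" "z \<in> {0,1,2}" for x y z
    using that assms by (auto simp: tri_def)
qed

lemma tri_comp: "f 0 = 0 \<Longrightarrow> (\<lambda>x y. f (tri a b x y)) = tri (f a) (f b)"
  by (auto simp: tri_def fun_eq_iff)

lemma tri_not_ultra: "b < a \<Longrightarrow> \<not> ultrametric_on {0,1,2} (tri a b)"
  unfolding ultrametric_on_def
  apply (intro notI)
  apply (elim conjE)
  apply (drule bspec[of _ _ 0], simp)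
  apply (drule bspec[of _ _ 2], simp)
  apply (drule bspec[of _ _ 1], simp)
  apply (simp add: tri_def)
  done

theorem theorem2p15:
  fixes F :: "(real \<Rightarrow> real) set"
  assumes "\<forall>f\<in>F. nonneg_fn f \<and> increasing_fn f \<and> amenable f"
  shows "(k_separating 2 F \<longrightarrow>
            (\<forall>(X::'a set) d. Metric_space X d \<longrightarrow>
               ((\<forall>f\<in>F. Metric_space X (\<lambda>x y. f (d x y))) \<longleftrightarrow> ultrametric_on X d)))
       \<and> (\<not> k_separating 2 F \<longrightarrow>
            (\<exists>(X::real set) d. Metric_space X d \<and>
               (\<forall>f\<in>F. Metric_space X (\<lambda>x y. f (d x y))) \<and> \<not> ultrametric_on X d))"
proof (intro conjI impI allI)
  fix X :: "'a set" and d
  assume sep: "k_separating 2 F" and M: "Metric_space X d"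
  show "(\<forall>f\<in>F. Metric_space X (\<lambda>x y. f (d x y))) \<longleftrightarrow> ultrametric_on X d"
  proof
    assume "\<forall>f\<in>F. Metric_space X (\<lambda>x y. f (d x y))"
    then show "ultrametric_on X d" using metric_imp_ultra[OF M sep] by blast
  next
    assume "ultrametric_on X d"
    then show "\<forall>f\<in>F. Metric_space X (\<lambda>x y. f (d x y))"
      using ultra_imp_metric assms unfolding ultrametric_on_def by blast
  qed
next
  assume ns: "\<not> k_separating 2 F"
  have "\<exists>s u. 0 < s \<and> s < u \<and> u \<le> 2 * s \<and> (\<forall>f\<in>F. f u \<le> 2 * f s)"
  proof (cases "F = {}")
    case True
    show ?thesis by (rule exI[of _ 1], rule exI[of _ 2]) (simp add: True)
  next
    case False
    then obtain g where g: "g \<in> F" by blast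
    obtain t1 t2 where t: "0 \<le> t1" "t1 < t2" "\<forall>f\<in>F. f t2 \<le> 2 * f t1"
      using ns assms unfolding k_separating_def by (auto simp: not_less)
    have "t1 \<noteq> 0"
    proof
      assume "t1 = 0"
      have "g 0 = 0" "g t2 \<noteq> 0" "g t2 \<ge> 0" using assms g t unfolding amenable_def nonneg_fn_def by auto
      thus False using t(3) g \<open>t1 = 0\<close> by force
    qed
    hence pos: "0 < t1" using t by simp
    have "\<forall>f\<in>F. f (min t2 (2 * t1)) \<le> 2 * f t1"
    proof
      fix f assume f: "f \<in> F"
      have "increasing_fn f" using assms f by blast
      moreover have "0 \<le> min t2 (2 * t1)" "min t2 (2 * t1) \<le> t2" using pos t by auto
      ultimately have 1: "f (min t2 (2 * t1)) \<le> f t2" unfolding increasing_fn_def by blast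
      have 2: "f t2 \<le> 2 * f t1" using t(3) f by blast
      from 1 2 show "f (min t2 (2 * t1)) \<le> 2 * f t1" by linarith
    qed
    moreover have "0 < t1" "t1 < min t2 (2 * t1)" "min t2 (2 * t1) \<le> 2 * t1" using pos t by auto
    ultimately show ?thesis by blast
  qed
  then obtain s u where su: "0 < s" "s < u" "u \<le> 2 * s" "\<forall>f\<in>F. f u \<le> 2 * f s" by blast
  show "\<exists>(X::real set) d. Metric_space X d \<and>
               (\<forall>f\<in>F. Metric_space X (\<lambda>x y. f (d x y))) \<and> \<not> ultrametric_on X d"
  proof (intro exI[of _ "{0,1,2}"] exI[of _ "tri u s"] conjI ballI)
    show "Metric_space {0,1,2} (tri u s)" using su by (intro tri_metric) auto
    show "\<not> ultrametric_on {0,1,2} (tri u s)" using su by (intro tri_not_ultra) auto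
    fix f assume f: "f \<in> F"
    have am: "amenable f" and nn: "nonneg_fn f" using assms f by auto
    have f0: "f 0 = 0" using am unfolding amenable_def by simp
    have "f u \<noteq> 0" "f s \<noteq> 0" using am su unfolding amenable_def by auto
    moreover have "f u \<ge> 0" "f s \<ge> 0" using nn su unfolding nonneg_fn_def by auto
    ultimately have pu: "f u > 0" and ps: "f s > 0" by auto
    show "Metric_space {0,1,2} (\<lambda>x y. f (tri u s x y))"
      unfolding tri_comp[of f, OF f0] using su f pu ps by (intro tri_metric) auto
  qed
qed

end
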